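(* Let $(G,u)$ be a unital po-group satisfying RIP such that the pseudo effect algebra $E=\Gamma(G,u)$ satisfies RDP (respectively RDP$_1$). Let $m,n\ge1$ and suppose $a_1+\cdots+a_m=b_1+\cdots+b_n$ in $G$, where $a_1,\ldots,a_{m-1},b_1,\ldots,b_{n-1}\in E$ and $a_m,b_n\in G^+$. Then for $\{a_i\}$ and $\{b_j\}$ the $(m,n)$-RDP (respectively the $(m,n)$-RDP$_1$) holds in $G$, i.e. there are $c_{ij}\in G^+$ ($1\le i\le m$, $1\le j\le n$) with $a_i=\sum_{j=1}^n c_{ij}$ and $b_j=\sum_{i=1}^m c_{ij}$ for all $i,j$ (and, in the RDP$_1$ case, additionally $c_{i+1,j}+\cdots+c_{mj}\ \mathbf{com}\ c_{i,j+1}+\cdots+c_{in}$ for all $1\le i<m$, $1\le j<n$).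
   Context: A po-group is a (not necessarily Abelian, additively written) group with a partial order $\le$ such that $a\le b$ implies $x+a+y\le x+b+y$; $G^+$ is its positive cone. A unital po-group $(G,u)$ is a po-group with a strong unit $u\in G^+$ (for each $g\in G$ there is $k\ge1$ with $g\le ku$). $\Gamma(G,u)=\{g\in G:0\le g\le u\}$ is a pseudo effect algebra with constants $0,u$ and partial addition: $a+b$ is defined (equal to the group sum) iff $a+b\le u$. RIP: whenever $a_i\le b_j$ for all $i,j\in\{1,2\}$, there is $c$ with $a_i\le c\le b_j$ for all $i,j$. For $a,b\in G^+$, $a\ \mathbf{com}\ b$ means $x+y=y+x$ for all $0\le x\le a$, $0\le y\le b$. RDP for a pseudo effect algebra $E$: whenever $a_1+a_2=b_1+b_2$ in $E$, there are $c_{11},c_{12},c_{21},c_{22}\in E$ with $a_1=c_{11}+c_{12}$, $a_2=c_{21}+c_{22}$, $b_1=c_{11}+c_{21}$, $b_2=c_{12}+c_{22}$ (all sums defined); RDP$_1$ additionally requires that $x\le c_{12}$, $y\le c_{21}$ in $E$ imply $x+y=y+x$. *)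

theory Defs
  imports Main
begin

definition po_group :: "'a::{group_add,order} itself \<Rightarrow> bool" where
  "po_group _ \<longleftrightarrow> (\<forall>a b x y :: 'a. a \<le> b \<longrightarrow> x + a + y \<le> x + b + y)"

definition nsum :: "nat \<Rightarrow> 'a::monoid_add \<Rightarrow> 'a" where
  "nsum k u = sum_list (replicate k u)"

definition strong_unit :: "'a::{group_add,order} \<Rightarrow> bool" where
  "strong_unit u \<longleftrightarrow> 0 \<le> u \<and> (\<forall>g. \<exists>k\<ge>1. g \<le> nsum k u)"

definition Gamma :: "'a::{group_add,order} \<Rightarrow> 'a set" where
  "Gamma u = {g. 0 \<le> g \<and> g \<le> u}"

definition RIP :: "'a::{group_add,order} itself \<Rightarrow> bool" where
  "RIP _ \<longleftrightarrow> (\<forall>a1 a2 b1 b2 :: 'a.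
      a1 \<le> b1 \<and> a1 \<le> b2 \<and> a2 \<le> b1 \<and> a2 \<le> b2 \<longrightarrow>
      (\<exists>c. a1 \<le> c \<and> a2 \<le> c \<and> c \<le> b1 \<and> c \<le> b2))"

definition com :: "'a::{group_add,order} \<Rightarrow> 'a \<Rightarrow> bool" where
  "com a b \<longleftrightarrow> (\<forall>x y. 0 \<le> x \<and> x \<le> a \<and> 0 \<le> y \<and> y \<le> b \<longrightarrow> x + y = y + x)"

text \<open>Partial addition of Gamma(G,u): a+b defined iff a+b \<le> u.\<close>
definition defd :: "'a::{group_add,order} \<Rightarrow> 'a \<Rightarrow> 'a \<Rightarrow> bool" where
  "defd u a b \<longleftrightarrow> a \<in> Gamma u \<and> b \<in> Gamma u \<and> a + b \<le> u"

definition RDP_Gamma :: "'a::{group_add,order} \<Rightarrow> bool" where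
  "RDP_Gamma u \<longleftrightarrow> (\<forall>a1 a2 b1 b2.
     defd u a1 a2 \<and> defd u b1 b2 \<and> a1 + a2 = b1 + b2 \<longrightarrow>
     (\<exists>c11 c12 c21 c22.
        defd u c11 c12 \<and> defd u c21 c22 \<and> defd u c11 c21 \<and> defd u c12 c22 \<and>
        a1 = c11 + c12 \<and> a2 = c21 + c22 \<and> b1 = c11 + c21 \<and> b2 = c12 + c22))"

definition RDP1_Gamma :: "'a::{group_add,order} \<Rightarrow> bool" where
  "RDP1_Gamma u \<longleftrightarrow> (\<forall>a1 a2 b1 b2.
     defd u a1 a2 \<and> defd u b1 b2 \<and> a1 + a2 = b1 + b2 \<longrightarrow>
     (\<exists>c11 c12 c21 c22.
        defd u c11 c12 \<and> defd u c21 c22 \<and> defd u c11 c21 \<and> defd u c12 c22 \<and>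
        a1 = c11 + c12 \<and> a2 = c21 + c22 \<and> b1 = c11 + c21 \<and> b2 = c12 + c22 \<and>
        (\<forall>x\<in>Gamma u. \<forall>y\<in>Gamma u. x \<le> c12 \<and> y \<le> c21 \<longrightarrow> x + y = y + x)))"

end

theory Submission
  imports Defs
begin
lemma po_l: "po_group TYPE('a::{group_add,order}) \<Longrightarrow> a \<le> b \<Longrightarrow> x + a \<le> x + (b::'a)"
  unfolding po_group_def by (metis add_0_right)
lemma po_r: "po_group TYPE('a::{group_add,order}) \<Longrightarrow> a \<le> b \<Longrightarrow> a + y \<le> b + (y::'a)"
  unfolding po_group_def by (metis add_0_left)

lemma po_add_nonneg: "po_group TYPE('a::{group_add,order}) \<Longrightarrow> 0 \<le> x \<Longrightarrow> 0 \<le> y \<Longrightarrow> 0 \<le> x + (y::'a)"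
  by (metis add_0_left order_trans po_l po_r)

lemma sum_nonneg': "po_group TYPE('a::{group_add,order}) \<Longrightarrow> (\<forall>x\<in>set xs. 0 \<le> x) \<Longrightarrow> 0 \<le> sum_list (xs::'a list)"
  by (induction xs) (auto intro: po_add_nonneg)

lemma sum_shift: "sum_list (map g [Suc i..<Suc k]) = sum_list (map (\<lambda>x. g (Suc x)) [i..<k])"
  by (simp add: map_Suc_upt[symmetric] comp_def del: upt_Suc)

lemma sum_0: "sum_list (map g [0..<Suc k]) = g 0 + sum_list (map (\<lambda>x. g (Suc x)) [0..<k])"
  by (simp add: upt_conv_Cons sum_shift del: upt_Suc)

lemma le_sum_r: "po_group TYPE('a::{group_add,order}) \<Longrightarrow> 0 \<le> x \<Longrightarrow> y \<le> x + (y::'a)"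
  using po_r[of 0 x y] by simp
lemma le_sum_l: "po_group TYPE('a::{group_add,order}) \<Longrightarrow> 0 \<le> y \<Longrightarrow> x \<le> x + (y::'a)"
  using po_l[of 0 y x] by simp

lemma nonneg_all:
  fixes n j :: nat
  assumes "\<forall>j<n-1. b j \<in> Gamma u" "0 \<le> b (n-1)" "j < n"
  shows "0 \<le> (b j::'a::{group_add,order})"
proof (cases "j < n - 1")
  case True then show ?thesis using assms(1) by (auto simp: Gamma_def)
next
  case False then have "j = n - 1" using assms(3) by auto
  then show ?thesis using assms(2) by simp
qed

lemma decA:
  fixes u a1 a2 b1 b2 :: "'a::{group_add,order}"
  assumes po: "po_group TYPE('a)" and rip: "RIP TYPE('a)"
   and H: "\<forall>a1 a2 b1 b2. defd u a1 a2 \<and> defd u b1 b2 \<and> a1 + a2 = b1 + b2 \<longrightarrow>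
     (\<exists>c11 c12 c21 c22. defd u c11 c12 \<and> defd u c21 c22 \<and> defd u c11 c21 \<and> defd u c12 c22 \<and>
        a1 = c11 + c12 \<and> a2 = c21 + c22 \<and> b1 = c11 + c21 \<and> b2 = c12 + c22 \<and> P c21 c12)"
   and a1: "a1 \<in> Gamma u" and b1: "b1 \<in> Gamma u" and a2: "0 \<le> a2" and b2: "0 \<le> b2"
   and eq: "a1 + a2 = b1 + b2"
  shows "\<exists>c11 c12 c21 c22. 0 \<le> c11 \<and> c12 \<in> Gamma u \<and> c21 \<in> Gamma u \<and> 0 \<le> c22 \<and>
     a1 = c11 + c12 \<and> a2 = c21 + c22 \<and> b1 = c11 + c21 \<and> b2 = c12 + c22 \<and> P c21 c12"
proof -
  have ua: "a1 \<le> u" "0 \<le> a1" using a1 by (auto simp: Gamma_def)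
  have ub: "b1 \<le> u" "0 \<le> b1" using b1 by (auto simp: Gamma_def)
  have "-u + a1 \<le> -u + u" using po_l[OF po ua(1)] .
  hence "-u + a1 + a2 \<le> 0 + a2" using po_r[OF po, of "-u+a1" 0 a2] by simp
  hence l1: "-u + (a1 + a2) \<le> a2" by (simp add: add.assoc)
  have "-u + b1 \<le> -u + u" using po_l[OF po ub(1)] .
  hence "-u + b1 + b2 \<le> 0 + b2" using po_r[OF po, of "-u+b1" 0 b2] by simp
  hence "-u + (b1 + b2) \<le> b2" by (simp add: add.assoc)
  hence l2: "-u + (a1 + a2) \<le> b2" by (simp only: eq)
  obtain p where p: "0 \<le> p" "-u + (a1+a2) \<le> p" "p \<le> a2" "p \<le> b2"
  proof -
    have "0 \<le> a2 \<and> 0 \<le> b2 \<and> -u + (a1+a2) \<le> a2 \<and> -u + (a1+a2) \<le> b2"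
      using a2 b2 l1 l2 by (intro conjI)
    then have "\<exists>c. 0 \<le> c \<and> -u + (a1+a2) \<le> c \<and> c \<le> a2 \<and> c \<le> b2"
      using rip unfolding RIP_def by (elim allE[of _ 0] allE[of _ "-u + (a1+a2)"] allE[of _ a2] allE[of _ b2] impE) auto
    then show ?thesis using that by (elim exE conjE)
  qed
  define q where "q = a2 - p"
  define r where "r = b2 - p"
  have q0: "0 \<le> q" using po_r[OF po p(3), of "-p"] by (simp add: q_def)
  have r0: "0 \<le> r" using po_r[OF po p(4), of "-p"] by (simp add: r_def)
  have s1: "a1 + a2 \<le> u + p" using po_l[OF po p(2), of u] by (simp add: add.assoc[symmetric])
  have t0: "a1 + a2 + -p \<le> u + p + -p" by (rule po_r[OF po s1])
  have "u + p + -p = u" by (simp add: add.assoc)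
  hence t: "a1 + a2 - p \<le> u" using t0 by (simp only: diff_conv_add_uminus)
  have e1: "a1 + q = a1 + a2 - p" unfolding q_def by (simp only: diff_conv_add_uminus add.assoc)
  have "b1 + r = b1 + b2 - p" unfolding r_def by (simp only: diff_conv_add_uminus add.assoc)
  hence e2: "b1 + r = a1 + a2 - p" by (simp only: eq)
  have qu: "q \<le> u" by (rule order_trans[OF le_sum_r[OF po ua(2), of q]]) (simp only: e1 t)
  have ru: "r \<le> u" by (rule order_trans[OF le_sum_r[OF po ub(2), of r]]) (simp only: e2 t)
  have dq: "defd u a1 q" using a1 q0 qu t e1 by (simp add: defd_def Gamma_def)
  have dr: "defd u b1 r" using b1 r0 ru t e2 by (simp add: defd_def Gamma_def)
  have eqr: "a1 + q = b1 + r" using e1 e2 by simp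
  obtain d11 d12 d21 d22 where d: "defd u d11 d12" "defd u d21 d22" "defd u d11 d21" "defd u d12 d22"
     "a1 = d11 + d12" "q = d21 + d22" "b1 = d11 + d21" "r = d12 + d22" "P d21 d12"
    using H[rule_format, OF conjI[OF dq conjI[OF dr eqr]]] by (elim exE conjE)
  have aq: "a2 = q + p" by (simp add: q_def)
  have x1: "a2 = d21 + (d22 + p)" using aq d(6) by (simp add: add.assoc)
  have br: "b2 = r + p" by (simp add: r_def)
  have x2: "b2 = d12 + (d22 + p)" using br d(8) by (simp add: add.assoc)
  have x3: "0 \<le> d22 + p" using d(2) p(1) po_add_nonneg[OF po] by (auto simp: defd_def Gamma_def)
  show ?thesis
    apply (rule exI[of _ d11], rule exI[of _ d12], rule exI[of _ d21], rule exI[of _ "d22 + p"])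
    using d x1 x2 x3 by (auto simp: defd_def Gamma_def)
qed

lemma main:
  fixes u :: "'a::{group_add,order}" and P :: "'a \<Rightarrow> 'a \<Rightarrow> bool"
  assumes po: "po_group TYPE('a)"
  and D: "\<And>a1 a2 b1 b2. a1 \<in> Gamma u \<Longrightarrow> b1 \<in> Gamma u \<Longrightarrow> 0 \<le> a2 \<Longrightarrow> 0 \<le> b2 \<Longrightarrow> a1 + a2 = b1 + b2 \<Longrightarrow>
     \<exists>c11 c12 c21 c22. 0 \<le> c11 \<and> c12 \<in> Gamma u \<and> c21 \<in> Gamma u \<and> 0 \<le> c22 \<and>
     a1 = c11 + c12 \<and> a2 = c21 + c22 \<and> b1 = c11 + c21 \<and> b2 = c12 + c22 \<and> P c21 c12"
  shows "1 \<le> m \<Longrightarrow> 1 \<le> n \<Longrightarrow> sum_list (map a [0..<m]) = sum_list (map b [0..<n]) \<Longrightarrow>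
    (\<forall>i<m-1. a i \<in> Gamma u) \<Longrightarrow> (\<forall>j<n-1. b j \<in> Gamma u) \<Longrightarrow> 0 \<le> a (m-1) \<Longrightarrow> 0 \<le> b (n-1) \<Longrightarrow>
    \<exists>c. (\<forall>i<m. \<forall>j<n. 0 \<le> c i j) \<and> (\<forall>i<m. a i = sum_list (map (c i) [0..<n])) \<and>
      (\<forall>j<n. b j = sum_list (map (\<lambda>i. c i j) [0..<m])) \<and>
      (\<forall>i<m-1. \<forall>j<n-1. P (sum_list (map (\<lambda>k. c k j) [Suc i..<m])) (sum_list (map (c i) [Suc j..<n])))"
proof (induction "m+n" arbitrary: m n a b rule: less_induct)
  case less
  have Gnn: "\<And>x. x \<in> Gamma u \<Longrightarrow> 0 \<le> x" by (simp add: Gamma_def)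
  show ?case
  proof (cases "m = 1")
    case True
    have nn: "\<forall>j<n. 0 \<le> b j"
      using nonneg_all[OF less.prems(5) less.prems(7)] by blast
    have a0: "a 0 = sum_list (map b [0..<n])" using less.prems(3) True by simp
    show ?thesis
      by (rule exI[of _ "\<lambda>i j. b j"]) (use True a0 nn in simp)
  next
    case m1: False
    show ?thesis
    proof (cases "n = 1")
      case True
      have nn: "\<forall>i<m. 0 \<le> a i"
        using nonneg_all[OF less.prems(4) less.prems(6)] by blast
      have b0: "b 0 = sum_list (map a [0..<m])" using less.prems(3) True by simp
      show ?thesis
        by (rule exI[of _ "\<lambda>i j. a i"]) (use True b0 nn in simp)
    next
      case n1: False
      obtain m' where m': "m = Suc m'" "m' \<ge> 1" using m1 less.prems(1) by (cases m) auto
      obtain n' where n': "n = Suc n'" "n' \<ge> 1" using n1 less.prems(2) by (cases n) auto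
      define A' where "A' = sum_list (map (\<lambda>i. a (Suc i)) [0..<m'])"
      define B' where "B' = sum_list (map (\<lambda>i. b (Suc i)) [0..<n'])"
      have eq: "a 0 + A' = b 0 + B'" using less.prems(3) by (simp add: A'_def B'_def m'(1) n'(1) sum_0 del: upt_Suc)
      have a0: "a 0 \<in> Gamma u" using less.prems(4) m' by auto
      have b0: "b 0 \<in> Gamma u" using less.prems(5) n' by auto
      have ann: "\<forall>i<m. 0 \<le> a i"
        using nonneg_all[OF less.prems(4) less.prems(6)] by blast
      have bnn: "\<forall>j<n. 0 \<le> b j"
        using nonneg_all[OF less.prems(5) less.prems(7)] by blast
      have A0: "0 \<le> A'" unfolding A'_def using ann m' by (intro sum_nonneg'[OF po]) auto
      have B0: "0 \<le> B'" unfolding B'_def using bnn n' by (intro sum_nonneg'[OF po]) auto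
      obtain c11 c12 c21 c22 where c: "0 \<le> c11" "c12 \<in> Gamma u" "c21 \<in> Gamma u" "0 \<le> c22"
        "a 0 = c11 + c12" "A' = c21 + c22" "b 0 = c11 + c21" "B' = c12 + c22" "P c21 c12"
        using D[OF a0 b0 A0 B0 eq] by blast
      define a1 where "a1 = (\<lambda>i::nat. if i = 0 then c12 else c22)"
      define b1 where "b1 = (\<lambda>j. b (Suc j))"
      have IH1: "\<exists>e. (\<forall>i<2. \<forall>j<n'. 0 \<le> e i j) \<and> (\<forall>i<2. a1 i = sum_list (map (e i) [0..<n'])) \<and>
        (\<forall>j<n'. b1 j = sum_list (map (\<lambda>i. e i j) [0..<2])) \<and>
        (\<forall>i<2-1. \<forall>j<n'-1. P (sum_list (map (\<lambda>k. e k j) [Suc i..<2])) (sum_list (map (e i) [Suc j..<n'])))"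
      proof (rule less.hyps)
        show "2 + n' < m + n" using m' n' by simp
        show "sum_list (map a1 [0..<2]) = sum_list (map b1 [0..<n'])"
          using c(8) by (simp add: a1_def b1_def B'_def eval_nat_numeral)
        show "\<forall>i<2-1. a1 i \<in> Gamma u" using c(2) by (simp add: a1_def)
        show "\<forall>j<n'-1. b1 j \<in> Gamma u" using less.prems(5) n' by (simp add: b1_def)
        show "0 \<le> a1 (2-1)" using c(4) by (simp add: a1_def)
        show "0 \<le> b1 (n'-1)" using less.prems(7) n' by (simp add: b1_def)
      qed (use n' in auto)
      then obtain e where e: "\<forall>i<2. \<forall>j<n'. 0 \<le> e i j" "\<forall>i<2. a1 i = sum_list (map (e i) [0..<n'])"
        "\<forall>j<n'. b1 j = sum_list (map (\<lambda>i. e i j) [0..<2])"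
        "\<forall>i<2-1. \<forall>j<n'-1. P (sum_list (map (\<lambda>k. e k j) [Suc i..<2])) (sum_list (map (e i) [Suc j..<n']))"
        by blast
      have ecol: "\<And>j. j < n' \<Longrightarrow> b (Suc j) = e 0 j + e 1 j"
        using e(3) by (simp add: b1_def eval_nat_numeral)
      have e1G: "\<And>j. j < n' - 1 \<Longrightarrow> e 1 j \<in> Gamma u"
      proof -
        fix j assume j: "j < n' - 1"
        have "b (Suc j) \<in> Gamma u" using less.prems(5) j n' by auto
        moreover have "e 1 j \<le> b (Suc j)" using ecol[of j] e(1) j le_sum_r[OF po, of "e 0 j" "e 1 j"] by auto
        moreover have "0 \<le> e 1 j" using e(1) j by auto
        ultimately show "e 1 j \<in> Gamma u" by (auto simp: Gamma_def)
      qed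
      define a2 where "a2 = (\<lambda>i. a (Suc i))"
      define b2 where "b2 = (\<lambda>j. if j = 0 then c21 else e 1 (j - 1))"
      have IH2: "\<exists>f. (\<forall>i<m'. \<forall>j<n. 0 \<le> f i j) \<and> (\<forall>i<m'. a2 i = sum_list (map (f i) [0..<n])) \<and>
        (\<forall>j<n. b2 j = sum_list (map (\<lambda>i. f i j) [0..<m'])) \<and>
        (\<forall>i<m'-1. \<forall>j<n-1. P (sum_list (map (\<lambda>k. f k j) [Suc i..<m'])) (sum_list (map (f i) [Suc j..<n])))"
      proof (rule less.hyps)
        show "m' + n < m + n" using m' by simp
        have c22e: "c22 = sum_list (map (e 1) [0..<n'])" using e(2)[rule_format, of 1] by (simp add: a1_def)
        have s1: "sum_list (map a2 [0..<m']) = A'" by (simp add: a2_def A'_def)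
        have s2: "sum_list (map b2 [0..<n]) = c21 + sum_list (map (e 1) [0..<n'])"
          by (simp add: b2_def n'(1) sum_0 del: upt_Suc)
        show "sum_list (map a2 [0..<m']) = sum_list (map b2 [0..<n])"
          unfolding s1 s2 c22e[symmetric] by (rule c(6))
        show "\<forall>i<m'-1. a2 i \<in> Gamma u" using less.prems(4) m' by (simp add: a2_def)
        show "\<forall>j<n-1. b2 j \<in> Gamma u" using c(3) e1G n' by (simp add: b2_def)
        show "0 \<le> a2 (m'-1)" using less.prems(6) m' by (simp add: a2_def)
        show "0 \<le> b2 (n-1)" using e(1) n' by (simp add: b2_def)
      qed (use m' n' in auto)
      then obtain f where f: "\<forall>i<m'. \<forall>j<n. 0 \<le> f i j" "\<forall>i<m'. a2 i = sum_list (map (f i) [0..<n])"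
        "\<forall>j<n. b2 j = sum_list (map (\<lambda>i. f i j) [0..<m'])"
        "\<forall>i<m'-1. \<forall>j<n-1. P (sum_list (map (\<lambda>k. f k j) [Suc i..<m'])) (sum_list (map (f i) [Suc j..<n]))"
        by blast
      define C where "C = (\<lambda>i j. if i = 0 then (if j = 0 then c11 else e 0 (j - 1)) else f (i - 1) j)"
      show ?thesis
      proof (rule exI[of _ C], intro conjI allI impI)
        fix i j assume "i < m" "j < n"
        then show "0 \<le> C i j" using c(1) e(1) f(1) m' n' by (auto simp: C_def)
      next
        fix i assume i: "i < m"
        show "a i = sum_list (map (C i) [0..<n])"
        proof (cases i)
          case 0
          have "sum_list (map (C i) [0..<n]) = c11 + sum_list (map (e 0) [0..<n'])"
            using 0 by (simp add: C_def n'(1) sum_0 del: upt_Suc)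
          also have "\<dots> = a 0" using e(2)[rule_format, of 0] c(5) by (simp add: a1_def)
          finally show ?thesis using 0 by simp
        next
          case (Suc i')
          have Ci: "C (Suc i') = f i'" by (simp add: C_def fun_eq_iff)
          have "i' < m'" using i m' Suc by simp
          then show ?thesis using f(2)[rule_format, of i'] Suc by (simp add: a2_def Ci)
        qed
      next
        fix j assume j: "j < n"
        have s: "sum_list (map (\<lambda>i. C i j) [0..<m]) = C 0 j + sum_list (map (\<lambda>i. f i j) [0..<m'])"
          by (simp add: C_def m'(1) sum_0 del: upt_Suc)
        show "b j = sum_list (map (\<lambda>i. C i j) [0..<m])"
        proof (cases j)
          case 0
          have "c21 = sum_list (map (\<lambda>i. f i j) [0..<m'])"
            using f(3)[rule_format, of 0] n' 0 by (simp add: b2_def)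
          moreover have "C 0 j = c11" using 0 by (simp add: C_def)
          ultimately show ?thesis using s c(7) 0 by simp
        next
          case (Suc j')
          have "e 1 j' = sum_list (map (\<lambda>i. f i j) [0..<m'])"
            using f(3)[rule_format, of j] j Suc by (simp add: b2_def)
          moreover have "C 0 j = e 0 j'" using Suc by (simp add: C_def)
          moreover have "b j = e 0 j' + e 1 j'" using ecol[of j'] Suc j n' by simp
          ultimately show ?thesis using s by simp
        qed
      next
        fix i j assume i: "i < m - 1" and j: "j < n - 1"
        show "P (sum_list (map (\<lambda>k. C k j) [Suc i..<m])) (sum_list (map (C i) [Suc j..<n]))"
        proof (cases i)
          case 0
          have L: "sum_list (map (\<lambda>k. C k j) [Suc i..<m]) = sum_list (map (\<lambda>k. f k j) [0..<m'])"
            using 0 by (simp add: C_def m'(1) sum_shift del: upt_Suc)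
          show ?thesis
          proof (cases j)
            case 0
            have R: "sum_list (map (C i) [Suc j..<n]) = sum_list (map (e 0) [0..<n'])"
              using `i = 0` 0 by (simp add: C_def n'(1) sum_shift del: upt_Suc)
            have "c12 = sum_list (map (e 0) [0..<n'])" using e(2)[rule_format, of 0] by (simp add: a1_def)
            moreover have "c21 = sum_list (map (\<lambda>k. f k j) [0..<m'])" using f(3)[rule_format, of 0] 0 n' by (simp add: b2_def)
            ultimately show ?thesis using L R c(9) by simp
          next
            case (Suc j')
            have R: "sum_list (map (C i) [Suc j..<n]) = sum_list (map (e 0) [Suc j'..<n'])"
              using `i = 0` Suc by (simp add: C_def n'(1) sum_shift del: upt_Suc)
            have "e 1 j' = sum_list (map (\<lambda>k. f k j) [0..<m'])" using f(3)[rule_format, of j] Suc j n' by (simp add: b2_def)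
            moreover have "P (e 1 j') (sum_list (map (e 0) [Suc j'..<n']))"
              using e(4)[rule_format, of 0 j'] Suc j n' by (simp add: eval_nat_numeral)
            ultimately show ?thesis using L R by simp
          qed
        next
          case (Suc i')
          have L: "sum_list (map (\<lambda>k. C k j) [Suc i..<m]) = sum_list (map (\<lambda>k. f k j) [i..<m'])"
            using Suc by (simp add: C_def m'(1) sum_shift del: upt_Suc)
          have Ci: "C (Suc i') = f i'" by (simp add: C_def fun_eq_iff)
          have "i' < m' - 1" using i Suc m' by simp
          then have "P (sum_list (map (\<lambda>k. f k j) [Suc i'..<m'])) (sum_list (map (f i') [Suc j..<n]))"
            using f(4) j by blast
          then show ?thesis using L Ci Suc by simp
        qed
      qed
    qed
  qed
qed

lemma H_RDP:
  fixes u :: "'a::{group_add,order}"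
  assumes "RDP_Gamma u"
  shows "\<forall>a1 a2 b1 b2. defd u a1 a2 \<and> defd u b1 b2 \<and> a1 + a2 = b1 + b2 \<longrightarrow>
     (\<exists>c11 c12 c21 c22. defd u c11 c12 \<and> defd u c21 c22 \<and> defd u c11 c21 \<and> defd u c12 c22 \<and>
        a1 = c11 + c12 \<and> a2 = c21 + c22 \<and> b1 = c11 + c21 \<and> b2 = c12 + c22 \<and> (\<lambda>_ _. True) c21 c12)"
  using assms unfolding RDP_Gamma_def by simp

lemma H_RDP1:
  fixes u :: "'a::{group_add,order}"
  assumes R: "RDP1_Gamma u"
  shows "\<forall>a1 a2 b1 b2. defd u a1 a2 \<and> defd u b1 b2 \<and> a1 + a2 = b1 + b2 \<longrightarrow>
     (\<exists>c11 c12 c21 c22. defd u c11 c12 \<and> defd u c21 c22 \<and> defd u c11 c21 \<and> defd u c12 c22 \<and>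
        a1 = c11 + c12 \<and> a2 = c21 + c22 \<and> b1 = c11 + c21 \<and> b2 = c12 + c22 \<and> com c21 c12)"
proof (intro allI impI)
  fix a1 a2 b1 b2 :: 'a
  assume h: "defd u a1 a2 \<and> defd u b1 b2 \<and> a1 + a2 = b1 + b2"
  obtain c11 c12 c21 c22 where c: "defd u c11 c12" "defd u c21 c22" "defd u c11 c21" "defd u c12 c22"
        "a1 = c11 + c12" "a2 = c21 + c22" "b1 = c11 + c21" "b2 = c12 + c22"
        and cm: "\<forall>x\<in>Gamma u. \<forall>y\<in>Gamma u. x \<le> c12 \<and> y \<le> c21 \<longrightarrow> x + y = y + x"
    using R[unfolded RDP1_Gamma_def, rule_format, OF h] by (elim exE conjE)
  have u12: "c12 \<le> u" "c21 \<le> u" using c by (auto simp: defd_def Gamma_def)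
  have "com c21 c12"
    unfolding com_def
  proof (intro allI impI)
    fix x y :: 'a assume xy: "0 \<le> x \<and> x \<le> c21 \<and> 0 \<le> y \<and> y \<le> c12"
    have "x \<in> Gamma u" "y \<in> Gamma u" using xy u12 by (auto simp: Gamma_def intro: order_trans)
    then have "y + x = x + y" using cm xy by blast
    then show "x + y = y + x" by simp
  qed
  then show "\<exists>c11 c12 c21 c22. defd u c11 c12 \<and> defd u c21 c22 \<and> defd u c11 c21 \<and> defd u c12 c22 \<and>
        a1 = c11 + c12 \<and> a2 = c21 + c22 \<and> b1 = c11 + c21 \<and> b2 = c12 + c22 \<and> com c21 c12"
    using c by blast
qed

theorem proposition3p5:
  fixes u :: "'a::{group_add,order}"
    and a b :: "nat \<Rightarrow> 'a" and m n :: nat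
  assumes "po_group TYPE('a)" and "strong_unit u" and "RIP TYPE('a)"
    and "m \<ge> 1" and "n \<ge> 1"
    and "sum_list (map a [0..<m]) = sum_list (map b [0..<n])"
    and "\<forall>i < m - 1. a i \<in> Gamma u" and "\<forall>j < n - 1. b j \<in> Gamma u"
    and "0 \<le> a (m - 1)" and "0 \<le> b (n - 1)"
  shows "(RDP_Gamma u \<longrightarrow>
           (\<exists>c :: nat \<Rightarrow> nat \<Rightarrow> 'a.
              (\<forall>i<m. \<forall>j<n. 0 \<le> c i j) \<and>
              (\<forall>i<m. a i = sum_list (map (c i) [0..<n])) \<and>
              (\<forall>j<n. b j = sum_list (map (\<lambda>i. c i j) [0..<m]))))
       \<and> (RDP1_Gamma u \<longrightarrow>
           (\<exists>c :: nat \<Rightarrow> nat \<Rightarrow> 'a.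
              (\<forall>i<m. \<forall>j<n. 0 \<le> c i j) \<and>
              (\<forall>i<m. a i = sum_list (map (c i) [0..<n])) \<and>
              (\<forall>j<n. b j = sum_list (map (\<lambda>i. c i j) [0..<m])) \<and>
              (\<forall>i < m - 1. \<forall>j < n - 1.
                 com (sum_list (map (\<lambda>k. c k j) [Suc i..<m]))
                     (sum_list (map (c i) [Suc j..<n])))))"
proof (intro conjI impI)
  assume R: "RDP_Gamma u"
  have "\<exists>c. (\<forall>i<m. \<forall>j<n. 0 \<le> c i j) \<and> (\<forall>i<m. a i = sum_list (map (c i) [0..<n])) \<and>
      (\<forall>j<n. b j = sum_list (map (\<lambda>i. c i j) [0..<m])) \<and>
      (\<forall>i<m-1. \<forall>j<n-1. (\<lambda>_ _. True) (sum_list (map (\<lambda>k. c k j) [Suc i..<m])) (sum_list (map (c i) [Suc j..<n])))"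
    by (rule main[OF assms(1) decA[OF assms(1) assms(3) H_RDP[OF R]] assms(4-10)])
  then show "\<exists>c :: nat \<Rightarrow> nat \<Rightarrow> 'a.
              (\<forall>i<m. \<forall>j<n. 0 \<le> c i j) \<and>
              (\<forall>i<m. a i = sum_list (map (c i) [0..<n])) \<and>
              (\<forall>j<n. b j = sum_list (map (\<lambda>i. c i j) [0..<m]))" by blast
next
  assume R: "RDP1_Gamma u"
  show "\<exists>c :: nat \<Rightarrow> nat \<Rightarrow> 'a.
              (\<forall>i<m. \<forall>j<n. 0 \<le> c i j) \<and>
              (\<forall>i<m. a i = sum_list (map (c i) [0..<n])) \<and>
              (\<forall>j<n. b j = sum_list (map (\<lambda>i. c i j) [0..<m])) \<and>
              (\<forall>i < m - 1. \<forall>j < n - 1.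
                 com (sum_list (map (\<lambda>k. c k j) [Suc i..<m]))
                     (sum_list (map (c i) [Suc j..<n])))"
    by (rule main[OF assms(1) decA[OF assms(1) assms(3) H_RDP1[OF R]] assms(4-10)])
qed

end
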